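(* In the setting of the context, suppose $G_2$ is a $p$-group and $S$ is a simple $KH_1$-module with $H_1'=H_1$, $G_1'=H_1$ and $H_1\subsetneq H_1^2\subsetneq G_2$. Then $H_1$ is not cyclic of order $p$.
   Context: $K$ is algebraically closed of characteristic zero; $G_2$ is a finite group with normal subgroups $G_1$, $H_2$, and $H_1=G_1\cap H_2$, all normal in $G_2$, with $G_2=G_1H_2$ and $[G_2:G_1]=[H_2:H_1]=p$. For a normal subgroup $N$ of a group $X$, an $N$-module $W$ and $x\in X$, ${}^xW$ is $W$ with action $n\cdot w=(x^{-1}nx)w$, and $I_X(W)=\{x\in X:{}^xW\cong W\}$. For a simple $KH_1$-module $S$: $H_1'=I_{H_2}(S)$, $G_1'=I_{G_1}(S)$, $H_1^2=I_{G_2}(S)$. *)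

theory Defs
  imports "HOL-Algebra.Coset" "HOL-Algebra.Generated_Groups"
    "HOL-Computational_Algebra.Polynomial" "Jordan_Normal_Form.Matrix"
begin

definition alg_closed :: "'k::field itself \<Rightarrow> bool" where
  "alg_closed TYPE('k) \<longleftrightarrow> (\<forall>q::'k poly. degree q > 0 \<longrightarrow> (\<exists>x. poly q x = 0))"

(* A d-dimensional K N-module, N a subgroup (carrier set) of G, given by a
   representation rho : N -> GL_d(K) *)
definition is_rep :: "('a,'b) monoid_scheme \<Rightarrow> 'a set \<Rightarrow> nat \<Rightarrow> ('a \<Rightarrow> 'k::field mat) \<Rightarrow> bool" where
  "is_rep G N d \<rho> \<longleftrightarrow> (\<forall>h\<in>N. \<rho> h \<in> carrier_mat d d) \<and>
     (\<forall>h\<in>N. \<forall>h'\<in>N. \<rho> (h \<otimes>\<^bsub>G\<^esub> h') = \<rho> h * \<rho> h') \<and> \<rho> \<one>\<^bsub>G\<^esub> = 1\<^sub>m d"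

definition submodule_rep :: "'a set \<Rightarrow> nat \<Rightarrow> ('a \<Rightarrow> 'k::field mat) \<Rightarrow> 'k vec set \<Rightarrow> bool" where
  "submodule_rep N d \<rho> W \<longleftrightarrow> W \<subseteq> carrier_vec d \<and> 0\<^sub>v d \<in> W \<and>
     (\<forall>v\<in>W. \<forall>w\<in>W. v + w \<in> W) \<and> (\<forall>c. \<forall>v\<in>W. c \<cdot>\<^sub>v v \<in> W) \<and>
     (\<forall>h\<in>N. \<forall>v\<in>W. \<rho> h *\<^sub>v v \<in> W)"

definition simple_rep :: "('a,'b) monoid_scheme \<Rightarrow> 'a set \<Rightarrow> nat \<Rightarrow> ('a \<Rightarrow> 'k::field mat) \<Rightarrow> bool" where
  "simple_rep G N d \<rho> \<longleftrightarrow> is_rep G N d \<rho> \<and> d > 0 \<and>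
     (\<forall>W. submodule_rep N d \<rho> W \<longrightarrow> W = {0\<^sub>v d} \<or> W = carrier_vec d)"

definition iso_rep :: "'a set \<Rightarrow> nat \<Rightarrow> ('a \<Rightarrow> 'k::field mat) \<Rightarrow> ('a \<Rightarrow> 'k mat) \<Rightarrow> bool" where
  "iso_rep N d \<rho> \<sigma> \<longleftrightarrow> (\<exists>P \<in> carrier_mat d d. invertible_mat P \<and> (\<forall>h\<in>N. P * \<rho> h = \<sigma> h * P))"

definition conj_rep :: "('a,'b) monoid_scheme \<Rightarrow> 'a \<Rightarrow> ('a \<Rightarrow> 'k mat) \<Rightarrow> ('a \<Rightarrow> 'k mat)" where
  "conj_rep G x \<rho> = (\<lambda>n. \<rho> (inv\<^bsub>G\<^esub> x \<otimes>\<^bsub>G\<^esub> n \<otimes>\<^bsub>G\<^esub> x))"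

definition inertia :: "('a,'b) monoid_scheme \<Rightarrow> 'a set \<Rightarrow> nat \<Rightarrow> ('a \<Rightarrow> 'k::field mat) \<Rightarrow> 'a set \<Rightarrow> 'a set" where
  "inertia G N d \<rho> X = {x \<in> X. iso_rep N d (conj_rep G x \<rho>) \<rho>}"

end

theory Submission
  imports Defs "HOL-Algebra.Multiplicative_Group" "HOL-Number_Theory.Residues"
begin

lemma conj_pow_aux:
  fixes G (structure)
  assumes "group G" "x \<in> carrier G" "h \<in> carrier G"
  shows "inv\<^bsub>G\<^esub> x \<otimes>\<^bsub>G\<^esub> (h [^]\<^bsub>G\<^esub> (i::nat)) \<otimes>\<^bsub>G\<^esub> x
         = (inv\<^bsub>G\<^esub> x \<otimes>\<^bsub>G\<^esub> h \<otimes>\<^bsub>G\<^esub> x) [^]\<^bsub>G\<^esub> i"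
proof -
  interpret group G by fact
  show ?thesis
  proof (induction i)
    case 0
    then show ?case using assms by simp
  next
    case (Suc i)
    have "inv x \<otimes> (h [^] Suc i) \<otimes> x = (inv x \<otimes> (h [^] i) \<otimes> x) \<otimes> (inv x \<otimes> h \<otimes> x)"
      using assms by (simp add: m_assoc) (simp add: m_assoc[symmetric])
    also have "\<dots> = (inv x \<otimes> h \<otimes> x) [^] Suc i" using Suc by simp
    finally show ?case .
  qed
qed

lemma fermat_pow:
  fixes p k :: nat assumes "prime p"
  shows "[k ^ (p ^ n) = k] (mod p)"
proof (induction n)
  case 0 then show ?case by simp
next
  case (Suc n)
  have kp: "[j ^ p = j] (mod p)" for j
  proof (cases "p dvd j")
    case True
    moreover have "j dvd j ^ p" using assms prime_gt_0_nat
      by (metis dvd_power gr0_implies_Suc)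
    ultimately have "p dvd j ^ p" by (rule dvd_trans)
    with True have "[j ^ p = 0] (mod p)" "[j = 0] (mod p)"
      using assms prime_gt_0_nat
      by (auto simp: cong_0_iff dvd_power[of p])
    then show ?thesis by (metis cong_sym cong_trans)
  next
    case False
    have "[j ^ (p - 1) = 1] (mod p)" using fermat_theorem[OF assms False] .
    then have "[j * j ^ (p - 1) = j * 1] (mod p)" by (rule cong_scalar_left)
    moreover have "j * j ^ (p - 1) = j ^ p"
      using assms prime_gt_0_nat by (metis Suc_diff_1 power_Suc)
    ultimately show ?thesis by simp
  qed
  have "k ^ (p ^ Suc n) = (k ^ (p ^ n)) ^ p"
    by (metis power_Suc power_mult mult.commute)
  then have "[k ^ (p ^ Suc n) = k ^ (p ^ n)] (mod p)" using kp by simp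
  then show ?case using Suc cong_trans by blast
qed

lemma central_aux:
  fixes G (structure)
  assumes grp: "group G" and fin: "finite (carrier G)" and p: "prime p"
    and pg: "card (carrier G) = p ^ n"
    and g: "g \<in> carrier G" and og: "group.ord G g = p"
    and x: "x \<in> carrier G"
    and inH: "inv\<^bsub>G\<^esub> x \<otimes>\<^bsub>G\<^esub> g \<otimes>\<^bsub>G\<^esub> x \<in> generate G {g}"
  shows "inv\<^bsub>G\<^esub> x \<otimes>\<^bsub>G\<^esub> g \<otimes>\<^bsub>G\<^esub> x = g"
proof -
  interpret group G by fact
  obtain k :: nat where k: "inv x \<otimes> g \<otimes> x = g [^] k"
    using inH generate_pow_on_finite_carrier[OF fin g] by blast
  have it: "inv (x [^] m) \<otimes> g \<otimes> (x [^] m) = g [^] (k ^ m)" for m :: nat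
  proof (induction m)
    case 0 then show ?case using g by simp
  next
    case (Suc m)
    have xm: "x [^] m \<in> carrier G" using x by simp
    have "inv (x [^] Suc m) \<otimes> g \<otimes> (x [^] Suc m)
        = inv x \<otimes> (inv (x [^] m) \<otimes> g \<otimes> (x [^] m)) \<otimes> x"
      using x xm g by (simp add: inv_mult_group m_assoc)
    also have "\<dots> = inv x \<otimes> (g [^] (k ^ m)) \<otimes> x" using Suc by simp
    also have "\<dots> = (g [^] k) [^] (k ^ m)"
      using conj_pow_aux[OF grp x g] k by simp
    also have "\<dots> = g [^] (k ^ Suc m)" using g by (simp add: nat_pow_pow mult.commute)
    finally show ?case .
  qed
  have "x [^] Coset.order G = \<one>" using pow_order_eq_1[OF x] .
  then have "g = g [^] (k ^ (p ^ n))" using it[of "Coset.order G"] g pg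
    by (simp add: Coset.order_def)
  then have "g [^] (k ^ (p ^ n)) = g [^] (1::nat)" using g by simp
  then have "g [^] (int (k ^ (p ^ n))) = g [^] (int 1)" by (simp only: int_pow_int)
  then have "int p dvd int 1 - int (k ^ (p ^ n))"
    using int_pow_eq[OF g, of "int (k ^ (p ^ n))" "int 1"] og
    by simp
  then have "[k ^ (p ^ n) = 1] (mod p)"
    by (metis cong_int_iff cong_iff_dvd_diff cong_sym of_nat_1)
  then have "[k = 1] (mod p)" using fermat_pow[OF p, of k n]
    by (metis cong_sym cong_trans)
  then have "int p dvd int k - int 1"
    by (metis cong_int_iff cong_iff_dvd_diff)
  then have "g [^] (int 1) = g [^] (int k)"
    using int_pow_eq[OF g, of "int 1" "int k"] og by simp
  then have "g [^] k = g" using g by (simp add: int_pow_int)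
  then show ?thesis using k by simp
qed

theorem mainTheorem14:
  fixes G :: "('a,'b) monoid_scheme" (structure)
    and G1 H2 H1 :: "'a set" and p :: nat
    and d :: nat and \<rho> :: "'a \<Rightarrow> 'k::field_char_0 mat"
  assumes K: "alg_closed TYPE('k)"
    and grp: "group G" and fin: "finite (carrier G)"
    and p: "prime p" and pgrp: "\<exists>n. card (carrier G) = p ^ n"
    and G1: "G1 \<lhd> G" and H2: "H2 \<lhd> G" and H1def: "H1 = G1 \<inter> H2" and H1: "H1 \<lhd> G"
    and prod: "carrier G = G1 <#> H2"
    and idx1: "card (carrier G) = p * card G1"
    and idx2: "card H2 = p * card H1"
    and S: "simple_rep G H1 d \<rho>"
    and I1: "inertia G H1 d \<rho> H2 = H1"
    and I2: "inertia G H1 d \<rho> G1 = H1"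
    and I3: "H1 \<subset> inertia G H1 d \<rho> (carrier G)"
    and I4: "inertia G H1 d \<rho> (carrier G) \<subset> carrier G"
  shows "\<not> (card H1 = p \<and> (\<exists>g\<in>H1. H1 = generate G {g}))"
proof
  assume A: "card H1 = p \<and> (\<exists>g\<in>H1. H1 = generate G {g})"
  interpret group G by (rule grp)
  obtain n where pg: "card (carrier G) = p ^ n" using pgrp by blast
  obtain g where gH: "g \<in> H1" and Hg: "H1 = generate G {g}" using A by blast
  have sub: "subgroup H1 G" using H1 by (simp add: normal_def)
  have g: "g \<in> carrier G" using gH sub subgroup.subset by blast
  have og: "ord g = p" using generate_pow_card[OF g] Hg A by simp
  have cent: "inv x \<otimes> y \<otimes> x = y" if x: "x \<in> carrier G" and y: "y \<in> H1" for x y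
  proof -
    have "inv x \<otimes> g \<otimes> x \<in> H1"
      using normal.inv_op_closed1[OF H1 x gH] .
    then have cg: "inv x \<otimes> g \<otimes> x = g"
      using central_aux[OF grp fin p pg g og x] Hg by simp
    obtain i :: nat where yi: "y = g [^] i"
      using y Hg generate_pow_on_finite_carrier[OF fin g] by blast
    show ?thesis using conj_pow_aux[OF grp x g, of i] cg yi by simp
  qed
  have rep: "\<forall>h\<in>H1. \<rho> h \<in> carrier_mat d d"
    using S by (simp add: simple_rep_def is_rep_def)
  have "inertia G H1 d \<rho> (carrier G) = carrier G"
  proof -
    have "iso_rep H1 d (conj_rep G x \<rho>) \<rho>" if x: "x \<in> carrier G" for x
      unfolding iso_rep_def conj_rep_def
    proof (intro bexI[of _ "1\<^sub>m d"] conjI ballI)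
      show "invertible_mat (1\<^sub>m d :: 'k mat)"
        unfolding invertible_mat_def inverts_mat_def by (auto intro!: exI[of _ "1\<^sub>m d"])
      fix h assume h: "h \<in> H1"
      show "1\<^sub>m d * \<rho> (inv x \<otimes> h \<otimes> x) = \<rho> h * 1\<^sub>m d"
      proof -
        have "\<rho> h \<in> carrier_mat d d" using rep h by blast
        then show ?thesis using cent[OF x h] by simp
      qed
    qed simp
    then show ?thesis unfolding inertia_def by auto
  qed
  then show False using I4 by simp
qed

end
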